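(* Let $n \ge 2$ and let $x, y, z \in \mathbb{R}^n/\mathbb{R}\mathbb{1}$. Then \[ \frac{1}{n-1}\, d_{\Delta}(x,y) \;\le\; \frac{1}{n-1}\, d_{\Delta}(x,z) + d_{\Delta}(y,z). \]
   Context: $\mathbb{1}=(1,\dots,1)\in\mathbb{R}^n$. The tropical torus is $\mathbb{R}^n/\mathbb{R}\mathbb{1}=\{x+\mathbb{R}\mathbb{1} : x\in\mathbb{R}^n\}$. The asymmetric tropical distance on $\mathbb{R}^n$ is $d_{\Delta}(x,y)=\sum_{i=1}^n (y_i-x_i) + n\max_{i}(x_i-y_i)$. It satisfies $d_\Delta(x+\lambda\mathbb{1},y+\mu\mathbb{1})=d_\Delta(x,y)$ for all $\lambda,\mu\in\mathbb{R}$, and hence induces a function $d_\Delta$ on $\mathbb{R}^n/\mathbb{R}\mathbb{1}$. *)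

theory Defs
  imports "HOL-Analysis.Analysis"
begin

text \<open>It is invariant under adding multiples of the all-ones vector to either argument,
  so it descends to the tropical torus R^n / R1; points of the torus are represented
  by arbitrary representatives.\<close>

definition trop_dist :: "real^'n \<Rightarrow> real^'n \<Rightarrow> real" where
  "trop_dist x y = (\<Sum>i\<in>UNIV. y$i - x$i) + real CARD('n) * (MAX i\<in>UNIV. x$i - y$i)"

end

theory Submission
  imports Defs
begin

theorem mainTheorem1:
  fixes x y z :: "real^'n"
  assumes "CARD('n) \<ge> 2"
  shows "trop_dist x y / (real CARD('n) - 1)
           \<le> trop_dist x z / (real CARD('n) - 1) + trop_dist y z"
proof -
  define n where "n = real CARD('n)"
  have n1: "n - 1 > 0" using assms unfolding n_def by simp
  define A where "A = (MAX i\<in>UNIV. x$i - z$i)"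
  define B where "B = (MAX i\<in>UNIV. y$i - z$i)"
  define C where "C = (MAX i\<in>UNIV. x$i - y$i)"
  obtain k where k: "C = x$k - y$k"
    unfolding C_def using Max_in[of "(\<lambda>i. x$i - y$i) ` UNIV"] by fastforce
  have Ak: "x$k - z$k \<le> A" unfolding A_def by (rule Max_ge) auto
  have Bi: "y$i - z$i \<le> B" for i unfolding B_def by (rule Max_ge) auto
  have s1: "(\<Sum>i\<in>UNIV. y$i - z$i) = (y$k - z$k) + (\<Sum>i\<in>UNIV-{k}. y$i - z$i)"
    by (simp add: sum.remove)
  have s2: "(\<Sum>i\<in>UNIV-{k}. y$i - z$i) \<le> (\<Sum>i\<in>UNIV-{k}. B)"
    by (rule sum_mono) (rule Bi)
  have s3: "(\<Sum>i\<in>UNIV-{k}. B) = (n - 1) * B"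
    unfolding n_def by (simp add: card_Diff_singleton of_nat_diff)
  have key: "(\<Sum>i\<in>UNIV. y$i - z$i) + C \<le> A + (n-1) * B"
    using s1 s2 s3 Ak k by linarith
  have e1: "(\<Sum>i\<in>UNIV. y$i - x$i) = (\<Sum>i\<in>UNIV. y$i - z$i) - (\<Sum>i\<in>UNIV. x$i - z$i)"
    by (simp add: sum_subtractf[symmetric])
  have e2: "(\<Sum>i\<in>UNIV. z$i - x$i) = - (\<Sum>i\<in>UNIV. x$i - z$i)"
    by (simp add: sum_negf[symmetric])
  have e3: "(\<Sum>i\<in>UNIV. z$i - y$i) = - (\<Sum>i\<in>UNIV. y$i - z$i)"
    by (simp add: sum_negf[symmetric])
  define Sa where "Sa = (\<Sum>i\<in>UNIV. x$i - z$i)"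
  define Sb where "Sb = (\<Sum>i\<in>UNIV. y$i - z$i)"
  have dxy: "trop_dist x y = Sb - Sa + n * C"
    unfolding trop_dist_def C_def n_def Sa_def Sb_def using e1 by simp
  have dxz: "trop_dist x z = - Sa + n * A"
    unfolding trop_dist_def A_def n_def Sa_def using e2 by simp
  have dyz: "trop_dist y z = - Sb + n * B"
    unfolding trop_dist_def B_def n_def Sb_def using e3 by simp
  have key': "Sb + C \<le> A + (n-1) * B" using key Sb_def by simp
  have npos: "n > 0" using n1 by simp
  have "Sb - Sa + n * C \<le> - Sa + n * A + (n - 1) * (- Sb + n * B)"
  proof -
    have "n * (Sb + C) \<le> n * (A + (n-1) * B)"
      using key' npos by (simp add: mult_left_mono)
    then show ?thesis by (simp add: algebra_simps)
  qed
  then have "trop_dist x y \<le> trop_dist x z + (n - 1) * trop_dist y z"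
    using dxy dxz dyz by simp
  then have "trop_dist x y / (n - 1) \<le> trop_dist x z / (n - 1) + trop_dist y z"
  proof -
    have "trop_dist x y / (n - 1) \<le> (trop_dist x z + (n - 1) * trop_dist y z) / (n - 1)"
      using n1 \<open>trop_dist x y \<le> trop_dist x z + (n - 1) * trop_dist y z\<close>
      by (simp add: divide_right_mono)
    also have "\<dots> = trop_dist x z / (n - 1) + trop_dist y z"
      using n1 by (simp add: add_divide_distrib)
    finally show ?thesis .
  qed
  then show ?thesis unfolding n_def .
qed

end
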